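(* Consider the aggregative game of the context with a single deceptive player $d$ deceiving the set $\mathcal{D}\subset[N]\setminus\{d\}$, where $\alpha_{i,d}\neq0$ for all $i\in\mathcal{D}$, and assume $K_j>0$ for all $j\in[N]$. Define $$\delta^-=\max_{i\in\mathcal{D},\,\alpha_{i,d}>0}\Big(\frac{-\kappa_i}{\alpha_{i,d}}+\frac{1}{\alpha_{i,d}}\sum_{k\neq i}\frac{|\alpha_{i,k}+\alpha_{k,i}|}{2}\Big),\qquad \delta^+=\min_{i\in\mathcal{D},\,\alpha_{i,d}<0}\Big(\frac{-\kappa_i}{\alpha_{i,d}}+\frac{1}{\alpha_{i,d}}\sum_{k\neq i}\frac{|\alpha_{i,k}+\alpha_{k,i}|}{2}\Big).$$ Then for every $\delta$ in the interval $I$ below, the map $x\mapsto\gamma(x,\delta)$ is strongly monotone on $\mathbb{R}^N$: $I=(\delta^-,\infty)$ if $\alpha_{i,d}>0$ for all $i\in\mathcal{D}$; $I=(-\infty,\delta^+)$ if $\alpha_{i,d}<0$ for all $i\in\mathcal{D}$; and $I=(\delta^-,\delta^+)$ otherwise.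
   Context: Aggregative game: $J_i(x)=c_i(x_i)+l_i(x_{-i})x_i$ for $i\in[N]$, where $c_i:\mathbb{R}\to\mathbb{R}$ is twice differentiable with $c_i''\ge\kappa_i>0$ ($\kappa_i$-strongly convex) and $l_i(x_{-i})=\sum_{k\neq i}\alpha_{i,k}x_k$ with constants $\alpha_{i,k}\in\mathbb{R}$ ($\alpha_{k,k}:=0$); $x_{-i}$ is the vector of actions of players other than $i$. Pseudogradient $\mathcal{G}(x)$ has entries $\mathcal{G}_i(x)=c_i'(x_i)+l_i(x_{-i})$. $K_j=\kappa_j-\sum_{k\neq j}\frac{|\alpha_{j,k}+\alpha_{k,j}|}{2}$. With deceptive player $d$ and deceived set $\mathcal{D}$, $\Lambda$ is the $N\times N$ diagonal matrix with $(i,i)$ entry $\alpha_{i,d}$ if $i\in\mathcal{D}$ and $0$ otherwise, and $\gamma(x,\delta)=\mathcal{G}(x)+\delta\Lambda x$. A map $F:\mathbb{R}^N\to\mathbb{R}^N$ is strongly monotone if there is $\kappa>0$ with $(F(x)-F(y))^\top(x-y)\ge\kappa|x-y|^2$ for all $x,y$. *)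

theory Defs
  imports "HOL-Analysis.Analysis"
begin

text \<open>Players are indexed by a finite type 'n (so N = CARD('n)); actions x :: real^'n.
  c i is the cost of player i, alpha i k the coupling coefficients.\<close>

definition lfun :: "('n::finite \<Rightarrow> 'n \<Rightarrow> real) \<Rightarrow> 'n \<Rightarrow> real^'n \<Rightarrow> real" where
  "lfun \<alpha> i x = (\<Sum>k\<in>UNIV - {i}. \<alpha> i k * x $ k)"

definition pseudogradient ::
  "('n::finite \<Rightarrow> real \<Rightarrow> real) \<Rightarrow> ('n \<Rightarrow> 'n \<Rightarrow> real) \<Rightarrow> real^'n \<Rightarrow> real^'n" where
  "pseudogradient c \<alpha> x = (\<chi> i. deriv (c i) (x $ i) + lfun \<alpha> i x)"

definition Kconst :: "('n::finite \<Rightarrow> real) \<Rightarrow> ('n \<Rightarrow> 'n \<Rightarrow> real) \<Rightarrow> 'n \<Rightarrow> real" where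
  "Kconst \<kappa> \<alpha> j = \<kappa> j - (\<Sum>k\<in>UNIV - {j}. \<bar>\<alpha> j k + \<alpha> k j\<bar> / 2)"

definition Lambda :: "('n::finite \<Rightarrow> 'n \<Rightarrow> real) \<Rightarrow> 'n \<Rightarrow> 'n set \<Rightarrow> real^'n^'n" where
  "Lambda \<alpha> d D = (\<chi> i j. if i = j \<and> i \<in> D then \<alpha> i d else 0)"

definition gamma ::
  "('n::finite \<Rightarrow> real \<Rightarrow> real) \<Rightarrow> ('n \<Rightarrow> 'n \<Rightarrow> real) \<Rightarrow> 'n \<Rightarrow> 'n set \<Rightarrow> real^'n \<Rightarrow> real \<Rightarrow> real^'n" where
  "gamma c \<alpha> d D x \<delta> = pseudogradient c \<alpha> x + \<delta> *\<^sub>R (Lambda \<alpha> d D *v x)"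

definition strongly_monotone :: "(real^'n::finite \<Rightarrow> real^'n) \<Rightarrow> bool" where
  "strongly_monotone F \<longleftrightarrow>
     (\<exists>\<kappa>>0. \<forall>x y. (F x - F y) \<bullet> (x - y) \<ge> \<kappa> * (norm (x - y))\<^sup>2)"

definition thr :: "('n::finite \<Rightarrow> real) \<Rightarrow> ('n \<Rightarrow> 'n \<Rightarrow> real) \<Rightarrow> 'n \<Rightarrow> 'n \<Rightarrow> real" where
  "thr \<kappa> \<alpha> d i = - \<kappa> i / \<alpha> i d + (1 / \<alpha> i d) * (\<Sum>k\<in>UNIV - {i}. \<bar>\<alpha> i k + \<alpha> k i\<bar> / 2)"

definition delta_minus :: "('n::finite \<Rightarrow> real) \<Rightarrow> ('n \<Rightarrow> 'n \<Rightarrow> real) \<Rightarrow> 'n \<Rightarrow> 'n set \<Rightarrow> real" where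
  "delta_minus \<kappa> \<alpha> d D = Max (thr \<kappa> \<alpha> d ` {i\<in>D. \<alpha> i d > 0})"

definition delta_plus :: "('n::finite \<Rightarrow> real) \<Rightarrow> ('n \<Rightarrow> 'n \<Rightarrow> real) \<Rightarrow> 'n \<Rightarrow> 'n set \<Rightarrow> real" where
  "delta_plus \<kappa> \<alpha> d D = Min (thr \<kappa> \<alpha> d ` {i\<in>D. \<alpha> i d < 0})"

end

theory Submission
  imports Defs
begin

lemma mono_deriv:
  fixes g :: "real \<Rightarrow> real"
  assumes dg: "\<And>x. g differentiable (at x)" and k: "\<And>x. deriv g x \<ge> K"
  shows "(g a - g b) * (a - b) \<ge> K * (a - b)^2"
proof -
  have D: "\<And>x. DERIV g x :> deriv g x" using dg DERIV_deriv_iff_real_differentiable by blast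
  have main: "g v - g u \<ge> K * (v - u)" if uv: "u < v" for u v
  proof -
    obtain z where "u < z" "z < v" "g v - g u = (v - u) * deriv g z"
      using MVT2[OF uv, of g "deriv g"] D by blast
    moreover have "(v - u) * deriv g z \<ge> (v - u) * K" using k[of z] uv by (intro mult_left_mono) auto
    ultimately show ?thesis by (simp add: mult.commute)
  qed
  show ?thesis
  proof (cases a b rule: linorder_cases)
    case less
    then have "g b - g a \<ge> K * (b - a)" by (rule main)
    then have "(g b - g a) * (b - a) \<ge> K * (b - a) * (b - a)" using less by (intro mult_right_mono) auto
    then show ?thesis by (simp add: power2_eq_square algebra_simps)
  next
    case equal then show ?thesis by simp
  next
    case greater
    then have "g a - g b \<ge> K * (a - b)" by (rule main)
    then have "(g a - g b) * (a - b) \<ge> K * (a - b) * (a - b)" using greater by (intro mult_right_mono) auto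
    then show ?thesis by (simp add: power2_eq_square algebra_simps)
  qed
qed

lemma cross_bound:
  fixes a :: "'n::finite \<Rightarrow> 'n \<Rightarrow> real" and h :: "'n \<Rightarrow> real"
  shows "(\<Sum>i\<in>UNIV. \<Sum>k\<in>UNIV. a i k * h k * h i) \<ge> - (\<Sum>i\<in>UNIV. \<Sum>k\<in>UNIV. \<bar>a i k + a k i\<bar>/2 * (h i)^2)"
proof -
  let ?S = "\<Sum>i\<in>UNIV. \<Sum>k\<in>UNIV. a i k * h k * h i"
  let ?B = "\<Sum>i\<in>UNIV. \<Sum>k\<in>UNIV. \<bar>a i k + a k i\<bar>/2 * (h i)^2"
  have sw: "?S = (\<Sum>i\<in>UNIV. \<Sum>k\<in>UNIV. a k i * h i * h k)"
    by (subst sum.swap) simp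
  have sw2: "?B = (\<Sum>i\<in>UNIV. \<Sum>k\<in>UNIV. \<bar>a i k + a k i\<bar>/2 * (h k)^2)"
    by (subst sum.swap) (simp add: add.commute)
  have pt: "(a i k + a k i) * h i * h k \<ge> - (\<bar>a i k + a k i\<bar>/2 * (h i)^2 + \<bar>a i k + a k i\<bar>/2 * (h k)^2)" for i k
  proof -
    have "\<bar>h i * h k\<bar> \<le> ((h i)^2 + (h k)^2)/2"
    proof -
      have "0 \<le> (\<bar>h i\<bar> - \<bar>h k\<bar>)^2" by simp
      then have "2 * (\<bar>h i\<bar> * \<bar>h k\<bar>) \<le> \<bar>h i\<bar>^2 + \<bar>h k\<bar>^2" by (simp add: power2_diff)
      then show ?thesis by (simp add: abs_mult)
    qed
    hence "\<bar>a i k + a k i\<bar> * \<bar>h i * h k\<bar> \<le> \<bar>a i k + a k i\<bar> * (((h i)^2 + (h k)^2)/2)"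
      by (intro mult_left_mono) auto
    moreover have "(a i k + a k i) * h i * h k \<ge> - (\<bar>a i k + a k i\<bar> * \<bar>h i * h k\<bar>)"
      by (metis abs_ge_minus_self abs_mult minus_le_iff mult.assoc)
    ultimately show ?thesis by (simp add: algebra_simps)
  qed
  have "2 * ?S = (\<Sum>i\<in>UNIV. \<Sum>k\<in>UNIV. (a i k + a k i) * h i * h k)"
    by (subst mult_2, subst (2) sw) (simp add: sum.distrib[symmetric] algebra_simps)
  also have "\<dots> \<ge> (\<Sum>i\<in>UNIV. \<Sum>k\<in>UNIV. - (\<bar>a i k + a k i\<bar>/2 * (h i)^2 + \<bar>a i k + a k i\<bar>/2 * (h k)^2))"
    by (intro sum_mono pt)
  also have "(\<Sum>i\<in>UNIV. \<Sum>k\<in>UNIV. - (\<bar>a i k + a k i\<bar>/2 * (h i)^2 + \<bar>a i k + a k i\<bar>/2 * (h k)^2))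
     = - ((\<Sum>i\<in>UNIV. \<Sum>k\<in>UNIV. \<bar>a i k + a k i\<bar>/2 * (h i)^2) + (\<Sum>i\<in>UNIV. \<Sum>k\<in>UNIV. \<bar>a i k + a k i\<bar>/2 * (h k)^2))"
    by (simp only: sum_negf sum.distrib)
  also have "\<dots> = - ?B - ?B" using sw2 by linarith
  finally show ?thesis by simp
qed

theorem lemma4:
  fixes c :: "'n::finite \<Rightarrow> real \<Rightarrow> real"
    and \<kappa> :: "'n \<Rightarrow> real"
    and \<alpha> :: "'n \<Rightarrow> 'n \<Rightarrow> real"
    and d :: 'n and D :: "'n set" and \<delta> :: real
  assumes diff1: "\<And>i x. c i differentiable (at x)"
    and diff2: "\<And>i x. deriv (c i) differentiable (at x)"
    and sconv: "\<And>i x. deriv (deriv (c i)) x \<ge> \<kappa> i"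
    and kpos: "\<And>i. \<kappa> i > 0"
    and adiag: "\<And>k. \<alpha> k k = 0"
    and Dsub: "D \<subseteq> UNIV - {d}" and Dne: "D \<noteq> {}"
    and anz: "\<And>i. i \<in> D \<Longrightarrow> \<alpha> i d \<noteq> 0"
    and Kpos: "\<And>j. Kconst \<kappa> \<alpha> j > 0"
    and hdelta:
      "if (\<forall>i\<in>D. \<alpha> i d > 0) then \<delta> > delta_minus \<kappa> \<alpha> d D
       else if (\<forall>i\<in>D. \<alpha> i d < 0) then \<delta> < delta_plus \<kappa> \<alpha> d D
       else delta_minus \<kappa> \<alpha> d D < \<delta> \<and> \<delta> < delta_plus \<kappa> \<alpha> d D"
  shows "strongly_monotone (\<lambda>x. gamma c \<alpha> d D x \<delta>)"
proof -
  define s where "s i = (\<Sum>k\<in>UNIV. \<bar>\<alpha> i k + \<alpha> k i\<bar> / 2)" for i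
  have s_alt: "s i = (\<Sum>k\<in>UNIV - {i}. \<bar>\<alpha> i k + \<alpha> k i\<bar> / 2)" for i
    unfolding s_def by (subst sum.remove[of UNIV i]) (auto simp: adiag)
  define e where "e i = \<kappa> i - s i + (if i \<in> D then \<delta> * \<alpha> i d else 0)" for i
  have epos: "e i > 0" for i
  proof (cases "i \<in> D")
    case False
    then show ?thesis using Kpos[of i] unfolding e_def Kconst_def s_alt by simp
  next
    case iD: True
    have thr: "thr \<kappa> \<alpha> d i = (s i - \<kappa> i) / \<alpha> i d"
      unfolding thr_def s_alt[symmetric] by (simp add: diff_divide_distrib)
    show ?thesis
    proof (cases "\<alpha> i d > 0")
      case True
      have "thr \<kappa> \<alpha> d i \<le> delta_minus \<kappa> \<alpha> d D"
        unfolding delta_minus_def using iD True by (intro Max_ge) auto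
      moreover have "\<delta> > delta_minus \<kappa> \<alpha> d D"
        using hdelta iD True by (auto split: if_splits)
      ultimately have "\<delta> > (s i - \<kappa> i) / \<alpha> i d" using thr by simp
      then have "\<delta> * \<alpha> i d > s i - \<kappa> i" using True by (simp add: pos_divide_less_eq)
      then show ?thesis unfolding e_def using iD by simp
    next
      case False
      then have neg: "\<alpha> i d < 0" using anz[OF iD] by linarith
      have "thr \<kappa> \<alpha> d i \<ge> delta_plus \<kappa> \<alpha> d D"
        unfolding delta_plus_def using iD neg by (intro Min_le) auto
      moreover have "\<delta> < delta_plus \<kappa> \<alpha> d D"
        using hdelta iD neg by (auto split: if_splits)
      ultimately have "\<delta> < (s i - \<kappa> i) / \<alpha> i d" using thr by simp
      then have "\<delta> * \<alpha> i d > s i - \<kappa> i" using neg by (simp add: neg_less_divide_eq)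
      then show ?thesis unfolding e_def using iD by simp
    qed
  qed
  define m where "m = Min (range e)"
  have mpos: "m > 0" unfolding m_def using epos by (subst Min_gr_iff) auto
  have me: "m \<le> e i" for i unfolding m_def by (intro Min_le) auto
  have lf: "lfun \<alpha> i z = (\<Sum>k\<in>UNIV. \<alpha> i k * z $ k)" for i z
    unfolding lfun_def using sum.remove[of UNIV i "\<lambda>k. \<alpha> i k * z $ k"] by (simp add: adiag)
  have Lv: "(Lambda \<alpha> d D *v z) $ i = (if i \<in> D then \<alpha> i d * z $ i else 0)" for z i
    unfolding Lambda_def matrix_vector_mult_def
    by (cases "i \<in> D") (simp_all add: if_distrib[where f="\<lambda>t. t * _"] cong: if_cong)
  show ?thesis
    unfolding strongly_monotone_def
  proof (intro exI[of _ m] conjI allI mpos)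
    fix x y :: "real^'n"
    define h where "h i = x $ i - y $ i" for i
    have comp: "(gamma c \<alpha> d D x \<delta> - gamma c \<alpha> d D y \<delta>) $ i =
        (deriv (c i) (x $ i) - deriv (c i) (y $ i)) + (\<Sum>k\<in>UNIV. \<alpha> i k * h k)
        + (if i \<in> D then \<delta> * \<alpha> i d * h i else 0)" for i
      unfolding gamma_def pseudogradient_def h_def
      by (simp add: lf Lv sum_subtractf algebra_simps)
    have "(gamma c \<alpha> d D x \<delta> - gamma c \<alpha> d D y \<delta>) \<bullet> (x - y) =
       (\<Sum>i\<in>UNIV. (deriv (c i) (x $ i) - deriv (c i) (y $ i)) * h i
          + (if i \<in> D then \<delta> * \<alpha> i d * (h i)^2 else 0))
       + (\<Sum>i\<in>UNIV. \<Sum>k\<in>UNIV. \<alpha> i k * h k * h i)"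
    proof -
      have xy: "(x - y) $ i = h i" for i by (simp add: h_def)
      have "(gamma c \<alpha> d D x \<delta> - gamma c \<alpha> d D y \<delta>) \<bullet> (x - y) =
       (\<Sum>i\<in>UNIV. ((deriv (c i) (x $ i) - deriv (c i) (y $ i)) * h i
          + (if i \<in> D then \<delta> * \<alpha> i d * (h i)^2 else 0))
       + (\<Sum>k\<in>UNIV. \<alpha> i k * h k * h i))"
        unfolding inner_vec_def comp xy
        by (intro sum.cong refl) (simp add: distrib_right sum_distrib_right power2_eq_square mult.assoc)
      then show ?thesis by (simp add: sum.distrib)
    qed
    also have "\<dots> \<ge> (\<Sum>i\<in>UNIV. \<kappa> i * (h i)^2 + (if i \<in> D then \<delta> * \<alpha> i d * (h i)^2 else 0))
       - (\<Sum>i\<in>UNIV. s i * (h i)^2)"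
    proof -
      have "(\<Sum>i\<in>UNIV. (deriv (c i) (x $ i) - deriv (c i) (y $ i)) * h i
          + (if i \<in> D then \<delta> * \<alpha> i d * (h i)^2 else 0)) \<ge>
          (\<Sum>i\<in>UNIV. \<kappa> i * (h i)^2 + (if i \<in> D then \<delta> * \<alpha> i d * (h i)^2 else 0))"
        unfolding h_def by (intro sum_mono add_right_mono mono_deriv diff2 sconv)
      moreover have "(\<Sum>i\<in>UNIV. \<Sum>k\<in>UNIV. \<alpha> i k * h k * h i) \<ge> - (\<Sum>i\<in>UNIV. s i * (h i)^2)"
        using cross_bound[of \<alpha> h] unfolding s_def by (simp add: sum_distrib_right)
      ultimately show ?thesis by linarith
    qed
    also have "(\<Sum>i\<in>UNIV. \<kappa> i * (h i)^2 + (if i \<in> D then \<delta> * \<alpha> i d * (h i)^2 else 0))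
       - (\<Sum>i\<in>UNIV. s i * (h i)^2) = (\<Sum>i\<in>UNIV. e i * (h i)^2)"
      unfolding e_def by (simp add: sum_subtractf[symmetric]) (intro sum.cong refl, simp add: algebra_simps)
    also have "\<dots> \<ge> (\<Sum>i\<in>UNIV. m * (h i)^2)"
      by (intro sum_mono mult_right_mono me) auto
    also have "(\<Sum>i\<in>UNIV. m * (h i)^2) = m * (norm (x - y))^2"
      by (simp add: norm_vec_def L2_set_def sum_distrib_left h_def sum_nonneg)
    finally show "m * (norm (x - y))^2 \<le> (gamma c \<alpha> d D x \<delta> - gamma c \<alpha> d D y \<delta>) \<bullet> (x - y)" .
  qed
qed

end
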